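(* Let $G=(V,E)$ be a graph with $m\ge1$ edges and no isolated vertices. Then the in-degree distribution of any biased orientation of $G$ is an optimal solution of the linear program $$\min\ \sum_{v\in V} -p_v\log\frac{\deg(v)}{m}\quad\text{subject to } p\in P(G),$$ and the optimum value of this linear program is at most $\mathrm{OPT}(G)$.
   Context: All graphs are finite, undirected and loopless, multiple edges allowed. For $S\subseteq V$, $e(S)$ is the fraction of edges of $G$ incident to at least one vertex of $S$, and $p(S):=\sum_{v\in S}p_v$. $P(G):=\{p\in\mathbb{R}^V : p(S)\le e(S)\ \forall S\subseteq V,\ p(V)=1\}$. For an orientation $\vec G$, the in-degree distribution is $p_v:=\rho_{\vec G}(v)/m$ with $\rho_{\vec G}(v)$ the in-degree of $v$. Entropy $H(p):=\sum_v -p_v\log p_v$ ($\log$ base $2$, $-0\log0:=0$); $\mathrm{OPT}(G)$ is the minimum entropy of the in-degree distribution of an orientation of $G$. An orientation is biased if each edge $vw$ with $\deg(v)>\deg(w)$ is oriented toward $v$. *)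

theory Defs
  imports Complex_Main
begin

definition multigraph :: "'v set \<Rightarrow> 'e set \<Rightarrow> ('e \<Rightarrow> 'v \<times> 'v) \<Rightarrow> bool" where
  "multigraph V E ends \<longleftrightarrow> finite V \<and> finite E \<and>
     (\<forall>e\<in>E. fst (ends e) \<in> V \<and> snd (ends e) \<in> V \<and> fst (ends e) \<noteq> snd (ends e))"

definition incident :: "('e \<Rightarrow> 'v \<times> 'v) \<Rightarrow> 'v \<Rightarrow> 'e \<Rightarrow> bool" where
  "incident ends v e \<longleftrightarrow> v = fst (ends e) \<or> v = snd (ends e)"

definition deg :: "'e set \<Rightarrow> ('e \<Rightarrow> 'v \<times> 'v) \<Rightarrow> 'v \<Rightarrow> nat" where
  "deg E ends v = card {e\<in>E. incident ends v e}"

definition edge_frac :: "'e set \<Rightarrow> ('e \<Rightarrow> 'v \<times> 'v) \<Rightarrow> 'v set \<Rightarrow> real" where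
  "edge_frac E ends S = real (card {e\<in>E. \<exists>v\<in>S. incident ends v e}) / real (card E)"

definition polytopeP :: "'v set \<Rightarrow> 'e set \<Rightarrow> ('e \<Rightarrow> 'v \<times> 'v) \<Rightarrow> ('v \<Rightarrow> real) set" where
  "polytopeP V E ends = {p. (\<forall>S\<subseteq>V. sum p S \<le> edge_frac E ends S) \<and> sum p V = 1}"

text \<open>An orientation points each edge towards one of its endpoints (its head);
  off E it is fixed to undefined so that the set of orientations is finite.\<close>
definition orientations :: "'e set \<Rightarrow> ('e \<Rightarrow> 'v \<times> 'v) \<Rightarrow> ('e \<Rightarrow> 'v) set" where
  "orientations E ends = {h. (\<forall>e\<in>E. incident ends (h e) e) \<and> (\<forall>e. e \<notin> E \<longrightarrow> h e = undefined)}"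

definition indeg :: "'e set \<Rightarrow> ('e \<Rightarrow> 'v) \<Rightarrow> 'v \<Rightarrow> nat" where
  "indeg E h v = card {e\<in>E. h e = v}"

definition indeg_dist :: "'e set \<Rightarrow> ('e \<Rightarrow> 'v) \<Rightarrow> 'v \<Rightarrow> real" where
  "indeg_dist E h v = real (indeg E h v) / real (card E)"

definition entropy :: "'v set \<Rightarrow> ('v \<Rightarrow> real) \<Rightarrow> real" where
  "entropy V p = (\<Sum>v\<in>V. if p v = 0 then 0 else - p v * log 2 (p v))"

definition OPT :: "'v set \<Rightarrow> 'e set \<Rightarrow> ('e \<Rightarrow> 'v \<times> 'v) \<Rightarrow> real" where
  "OPT V E ends = Min ((\<lambda>h. entropy V (indeg_dist E h)) ` orientations E ends)"

definition biased :: "'e set \<Rightarrow> ('e \<Rightarrow> 'v \<times> 'v) \<Rightarrow> ('e \<Rightarrow> 'v) \<Rightarrow> bool" where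
  "biased E ends h \<longleftrightarrow> (\<forall>e\<in>E. \<forall>v w. (ends e = (v, w) \<or> ends e = (w, v)) \<longrightarrow>
       deg E ends v > deg E ends w \<longrightarrow> h e = v)"

definition lp_obj :: "'v set \<Rightarrow> 'e set \<Rightarrow> ('e \<Rightarrow> 'v \<times> 'v) \<Rightarrow> ('v \<Rightarrow> real) \<Rightarrow> real" where
  "lp_obj V E ends p = (\<Sum>v\<in>V. - p v * log 2 (real (deg E ends v) / real (card E)))"

definition lp_value :: "'v set \<Rightarrow> 'e set \<Rightarrow> ('e \<Rightarrow> 'v \<times> 'v) \<Rightarrow> real" where
  "lp_value V E ends = Inf (lp_obj V E ends ` polytopeP V E ends)"

end

theory Submission
  imports Defs "HOL-Library.FuncSet"
begin

lemma layer:
  fixes V :: "'a set" and c p q :: "'a \<Rightarrow> real"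
  assumes fin: "finite V" and eq: "sum p V = sum q V"
    and thr: "\<forall>t. sum p {v\<in>V. c v \<le> t} \<le> sum q {v\<in>V. c v \<le> t}"
  shows "(\<Sum>v\<in>V. q v * c v) \<le> (\<Sum>v\<in>V. p v * c v)"
  using thr
proof (induction "card (c ` V)" arbitrary: c rule: less_induct)
  case less
  show ?case
  proof (cases "card (c ` V) \<le> 1")
    case True
    show ?thesis
    proof (cases "V = {}")
      case True then show ?thesis by simp
    next
      case False
      then obtain a where "c ` V = {a}" using True fin
        by (metis One_nat_def card_0_eq card_le_Suc0_iff_eq finite_imageI image_is_empty le_SucE
            singleton_iff subsetI subset_singleton_iff)
      then have "\<forall>v\<in>V. c v = a" by auto
      then have "(\<Sum>v\<in>V. q v * c v) = sum q V * a" "(\<Sum>v\<in>V. p v * c v) = sum p V * a"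
        by (simp_all add: sum_distrib_right)
      then show ?thesis using eq by simp
    qed
  next
    case False
    define M where "M = Max (c ` V)"
    define T where "T = c ` V - {M}"
    have finT: "finite T" using fin T_def by simp
    have cV: "finite (c ` V)" "c ` V \<noteq> {}" using fin False by auto
    have MV: "M \<in> c ` V" using cV M_def by simp
    have Tne: "T \<noteq> {}" using False MV T_def
      by (metis Diff_eq_empty_iff card_le_Suc0_iff_eq One_nat_def cV(1) insert_subset singletonD subset_iff)
    define M2 where "M2 = Max T"
    have M2T: "M2 \<in> T" using finT Tne M2_def by simp
    have M2lt: "M2 < M" using M2T T_def M_def cV
      by (metis DiffD1 DiffD2 Max_ge insertCI order_le_neq_trans)
    have cleM: "\<And>v. v \<in> V \<Longrightarrow> c v \<le> M" using M_def cV by simp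
    have big: "\<And>v. v \<in> V \<Longrightarrow> M2 < c v \<Longrightarrow> c v = M"
    proof (rule ccontr)
      fix v assume v: "v \<in> V" "M2 < c v" "c v \<noteq> M"
      then have "c v \<in> T" using T_def by auto
      then have "c v \<le> M2" using M2_def finT by simp
      then show False using v by simp
    qed
    define c' where "c' = (\<lambda>v. min (c v) M2)"
    have "c' ` V \<subseteq> T"
    proof
      fix x assume "x \<in> c' ` V"
      then obtain v where v: "v \<in> V" "x = min (c v) M2" using c'_def by auto
      show "x \<in> T"
      proof (cases "c v \<le> M2")
        case True
        then show ?thesis using v M2lt T_def by auto
      next
        case False then show ?thesis using v M2T by auto
      qed
    qed
    then have "card (c' ` V) \<le> card T" using finT card_mono by blast
    also have "card T < card (c ` V)" unfolding T_def by (rule card_Diff1_less[OF cV(1) MV])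
    finally have lt: "card (c' ` V) < card (c ` V)" .
    have thr': "\<forall>t. sum p {v\<in>V. c' v \<le> t} \<le> sum q {v\<in>V. c' v \<le> t}"
    proof
      fix t
      show "sum p {v\<in>V. c' v \<le> t} \<le> sum q {v\<in>V. c' v \<le> t}"
      proof (cases "M2 \<le> t")
        case True
        then have "{v\<in>V. c' v \<le> t} = V" using c'_def by auto
        then show ?thesis using eq by simp
      next
        case False
        then have "{v\<in>V. c' v \<le> t} = {v\<in>V. c v \<le> t}" using c'_def by auto
        then show ?thesis using less.prems by simp
      qed
    qed
    have IH: "(\<Sum>v\<in>V. q v * c' v) \<le> (\<Sum>v\<in>V. p v * c' v)"
      using less.hyps[OF lt thr'] .
    have dec: "\<And>v. v \<in> V \<Longrightarrow> c v = c' v + (M - M2) * (1 - (if c v \<le> M2 then 1 else 0))"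
    proof -
      fix v assume v: "v \<in> V"
      show "c v = c' v + (M - M2) * (1 - (if c v \<le> M2 then 1 else 0))"
      proof (cases "c v \<le> M2")
        case True then show ?thesis unfolding c'_def by simp
      next
        case False then have "c v = M" using big v by simp
        then show ?thesis unfolding c'_def using False by simp
      qed
    qed
    have split: "\<And>r. (\<Sum>v\<in>V. r v * c v) = (\<Sum>v\<in>V. r v * c' v) + (M - M2) * (sum r V - sum r {v\<in>V. c v \<le> M2})"
    proof -
      fix r :: "'a \<Rightarrow> real"
      have "(\<Sum>v\<in>V. r v * c v) = (\<Sum>v\<in>V. r v * c' v + (M - M2) * (r v - r v * (if c v \<le> M2 then 1 else 0)))"
      proof (rule sum.cong)
        fix v assume v: "v \<in> V"
        have "r v * c v = r v * (c' v + (M - M2) * (1 - (if c v \<le> M2 then 1 else 0)))"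
          using dec[OF v] by (rule arg_cong)
        then show "r v * c v = r v * c' v + (M - M2) * (r v - r v * (if c v \<le> M2 then 1 else 0))"
          by (simp only: algebra_simps)
      qed simp
      also have "\<dots> = (\<Sum>v\<in>V. r v * c' v) + (M - M2) * (sum r V - (\<Sum>v\<in>V. r v * (if c v \<le> M2 then 1 else 0)))"
        by (simp add: sum.distrib sum_distrib_left[symmetric] sum_subtractf)
      also have "(\<Sum>v\<in>V. r v * (if c v \<le> M2 then 1 else 0)) = sum r {v\<in>V. c v \<le> M2}"
        using fin by (simp add: sum.inter_filter[symmetric] if_distrib cong: if_cong)
      finally show "(\<Sum>v\<in>V. r v * c v) = (\<Sum>v\<in>V. r v * c' v) + (M - M2) * (sum r V - sum r {v\<in>V. c v \<le> M2})" .
    qed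
    have "(M - M2) * (sum q V - sum q {v\<in>V. c v \<le> M2}) \<le> (M - M2) * (sum p V - sum p {v\<in>V. c v \<le> M2})"
      using M2lt less.prems eq by (intro mult_left_mono) auto
    then show ?thesis using IH split[of q] split[of p] by linarith
  qed
qed

lemma sum_indeg:
  assumes "finite E" "finite S"
  shows "(\<Sum>v\<in>S. real (indeg E h v)) = real (card {e\<in>E. h e \<in> S})"
proof -
  have "{e\<in>E. h e \<in> S} = (\<Union>v\<in>S. {e\<in>E. h e = v})" by auto
  moreover have "card (\<Union>v\<in>S. {e\<in>E. h e = v}) = (\<Sum>v\<in>S. card {e\<in>E. h e = v})"
    using assms by (intro card_UN_disjoint) auto
  ultimately have "card {e\<in>E. h e \<in> S} = (\<Sum>v\<in>S. card {e\<in>E. h e = v})" by simp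
  then show ?thesis unfolding indeg_def by simp
qed

lemma in_polytope:
  assumes mg: "multigraph V E ends" and m: "card E \<ge> 1"
    and inc: "\<forall>e\<in>E. incident ends (h e) e"
  shows "indeg_dist E h \<in> polytopeP V E ends"
proof -
  have finV: "finite V" and finE: "finite E" using mg unfolding multigraph_def by auto
  have mpos: "real (card E) > 0" using m by simp
  have dist: "\<And>S. S \<subseteq> V \<Longrightarrow> sum (indeg_dist E h) S = real (card {e\<in>E. h e \<in> S}) / real (card E)"
  proof -
    fix S assume "S \<subseteq> V"
    then have "finite S" using finV finite_subset by blast
    then show "sum (indeg_dist E h) S = real (card {e\<in>E. h e \<in> S}) / real (card E)"
      unfolding indeg_dist_def using sum_indeg[OF finE, of S h]
      by (simp add: sum_divide_distrib[symmetric])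
  qed
  have "\<forall>S\<subseteq>V. sum (indeg_dist E h) S \<le> edge_frac E ends S"
  proof (intro allI impI)
    fix S assume S: "S \<subseteq> V"
    have "{e\<in>E. h e \<in> S} \<subseteq> {e\<in>E. \<exists>v\<in>S. incident ends v e}" using inc by auto
    then have "card {e\<in>E. h e \<in> S} \<le> card {e\<in>E. \<exists>v\<in>S. incident ends v e}"
      using finE by (intro card_mono) auto
    then show "sum (indeg_dist E h) S \<le> edge_frac E ends S"
      unfolding dist[OF S] edge_frac_def using mpos by (simp add: divide_right_mono)
  qed
  moreover have "{e\<in>E. h e \<in> V} = E" using inc mg unfolding multigraph_def incident_def by auto
  then have "sum (indeg_dist E h) V = 1" using dist[of V] mpos by simp
  ultimately show ?thesis unfolding polytopeP_def by simp
qed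

lemma fin_orient:
  assumes "finite E"
  shows "finite (orientations E ends)" "orientations E ends \<noteq> {}"
proof -
  have "orientations E ends \<subseteq> (\<Pi>\<^sub>E e\<in>E. {fst (ends e), snd (ends e)})"
    unfolding orientations_def incident_def PiE_def extensional_def by auto
  moreover have "finite (\<Pi>\<^sub>E e\<in>E. {fst (ends e), snd (ends e)})"
    using assms by (intro finite_PiE) auto
  ultimately show "finite (orientations E ends)" by (rule finite_subset)
  have "(\<lambda>e. if e \<in> E then fst (ends e) else undefined) \<in> orientations E ends"
    unfolding orientations_def incident_def by auto
  then show "orientations E ends \<noteq> {}" by blast
qed

lemma entropy_ge:
  assumes mg: "multigraph V E ends" and m: "card E \<ge> 1"
    and inc: "\<forall>e\<in>E. incident ends (h e) e"
  shows "lp_obj V E ends (indeg_dist E h) \<le> entropy V (indeg_dist E h)"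
  unfolding lp_obj_def entropy_def
proof (rule sum_mono)
  fix v assume v: "v \<in> V"
  have finE: "finite E" using mg unfolding multigraph_def by auto
  have mpos: "real (card E) > 0" using m by simp
  let ?p = "indeg_dist E h v"
  have "indeg E h v \<le> deg E ends v" unfolding indeg_def deg_def
    using finE inc by (intro card_mono) auto
  then have le: "?p \<le> real (deg E ends v) / real (card E)"
    unfolding indeg_dist_def using mpos by (simp add: divide_right_mono)
  have nn: "?p \<ge> 0" unfolding indeg_dist_def by simp
  show "- ?p * log 2 (real (deg E ends v) / real (card E)) \<le> (if ?p = 0 then 0 else - ?p * log 2 ?p)"
  proof (cases "?p = 0")
    case True then show ?thesis by simp
  next
    case False
    then have pp: "?p > 0" using nn by simp
    have "log 2 ?p \<le> log 2 (real (deg E ends v) / real (card E))"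
      using pp le by (subst log_le_cancel_iff) auto
    then show ?thesis using False pp by (simp add: mult_left_mono)
  qed
qed

theorem mainTheorem7:
  fixes V :: "'v set" and E :: "'e set" and ends :: "'e \<Rightarrow> 'v \<times> 'v" and h :: "'e \<Rightarrow> 'v"
  assumes "multigraph V E ends"
    and "card E \<ge> 1"
    and "\<forall>v\<in>V. deg E ends v \<ge> 1"
    and "\<forall>e\<in>E. incident ends (h e) e"
    and "biased E ends h"
  shows "indeg_dist E h \<in> polytopeP V E ends
    \<and> (\<forall>p\<in>polytopeP V E ends. lp_obj V E ends (indeg_dist E h) \<le> lp_obj V E ends p)
    \<and> lp_value V E ends = lp_obj V E ends (indeg_dist E h)
    \<and> lp_value V E ends \<le> OPT V E ends"
proof -
  note mg = assms(1) and m = assms(2) and dpos = assms(3) and inc = assms(4) and bias = assms(5)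
  have finV: "finite V" and finE: "finite E" using mg unfolding multigraph_def by auto
  have mpos: "real (card E) > 0" using m by simp
  define q where "q = indeg_dist E h"
  define c where "c = (\<lambda>v. - log 2 (real (deg E ends v) / real (card E)))"
  have qP: "q \<in> polytopeP V E ends" unfolding q_def by (rule in_polytope[OF mg m inc])
  have obj: "\<And>p. lp_obj V E ends p = (\<Sum>v\<in>V. p v * c v)"
    unfolding lp_obj_def c_def by simp
  have deglt: "\<And>v w. v \<in> V \<Longrightarrow> w \<in> V \<Longrightarrow> c v < c w \<Longrightarrow> deg E ends w < deg E ends v"
  proof -
    fix v w assume vw: "v \<in> V" "w \<in> V" "c v < c w"
    then have "log 2 (real (deg E ends w) / real (card E)) < log 2 (real (deg E ends v) / real (card E))"
      unfolding c_def by simp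
    moreover have "real (deg E ends w) / real (card E) > 0" "real (deg E ends v) / real (card E) > 0"
      using dpos vw mpos by auto
    ultimately have "real (deg E ends w) / real (card E) < real (deg E ends v) / real (card E)"
      by (subst (asm) log_less_cancel_iff) auto
    then show "deg E ends w < deg E ends v" using mpos by (simp add: divide_strict_right_mono_neg divide_less_cancel)
  qed
  have sumq: "\<And>S. S \<subseteq> V \<Longrightarrow> sum q S = real (card {e\<in>E. h e \<in> S}) / real (card E)"
  proof -
    fix S assume "S \<subseteq> V"
    then have "finite S" using finV finite_subset by blast
    then show "sum q S = real (card {e\<in>E. h e \<in> S}) / real (card E)"
      unfolding q_def indeg_dist_def using sum_indeg[OF finE, of S h]
      by (simp add: sum_divide_distrib[symmetric])
  qed
  have opt: "\<forall>p\<in>polytopeP V E ends. lp_obj V E ends q \<le> lp_obj V E ends p"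
  proof
    fix p assume pP: "p \<in> polytopeP V E ends"
    have "(\<Sum>v\<in>V. q v * c v) \<le> (\<Sum>v\<in>V. p v * c v)"
    proof (rule layer[OF finV])
      show "sum p V = sum q V" using pP qP unfolding polytopeP_def by simp
      show "\<forall>t. sum p {v\<in>V. c v \<le> t} \<le> sum q {v\<in>V. c v \<le> t}"
      proof
        fix t
        define S where "S = {v\<in>V. c v \<le> t}"
        have SV: "S \<subseteq> V" unfolding S_def by auto
        have "{e\<in>E. \<exists>v\<in>S. incident ends v e} \<subseteq> {e\<in>E. h e \<in> S}"
        proof
          fix e assume "e \<in> {e\<in>E. \<exists>v\<in>S. incident ends v e}"
          then obtain v where e: "e \<in> E" and vS: "v \<in> S" and iv: "incident ends v e" by auto
          show "e \<in> {e\<in>E. h e \<in> S}"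
          proof (rule ccontr)
            assume "e \<notin> {e\<in>E. h e \<in> S}"
            then have hS: "h e \<notin> S" using e by simp
            obtain a b where ab: "ends e = (a, b)" by (cases "ends e")
            have abV: "a \<in> V" "b \<in> V" using mg e ab unfolding multigraph_def by force+
            have "h e = a \<or> h e = b" using inc e ab unfolding incident_def by force
            moreover have "v = a \<or> v = b" using iv ab unfolding incident_def by simp
            ultimately obtain w where w: "h e = w" "ends e = (v, w) \<or> ends e = (w, v)" "w \<in> V"
              using hS vS ab abV by auto
            have "c v \<le> t" using vS S_def by simp
            moreover have "\<not> c w \<le> t" using w hS S_def by simp
            ultimately have "deg E ends w < deg E ends v" using deglt vS SV w(3) by auto
            then have "h e = v" using bias e w(2) unfolding biased_def by blast
            then show False using w hS vS by simp
          qed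
        qed
        moreover have "{e\<in>E. h e \<in> S} \<subseteq> {e\<in>E. \<exists>v\<in>S. incident ends v e}" using inc by auto
        ultimately have eqs: "{e\<in>E. h e \<in> S} = {e\<in>E. \<exists>v\<in>S. incident ends v e}" by blast
        have "sum p S \<le> edge_frac E ends S" using pP SV unfolding polytopeP_def by blast
        also have "\<dots> = sum q S" unfolding sumq[OF SV] edge_frac_def eqs ..
        finally show "sum p {v\<in>V. c v \<le> t} \<le> sum q {v\<in>V. c v \<le> t}" unfolding S_def .
      qed
    qed
    then show "lp_obj V E ends q \<le> lp_obj V E ends p" unfolding obj .
  qed
  have val: "lp_value V E ends = lp_obj V E ends q"
    unfolding lp_value_def using qP opt by (intro cInf_eq_minimum) auto
  have "OPT V E ends \<in> (\<lambda>h. entropy V (indeg_dist E h)) ` orientations E ends"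
    unfolding OPT_def using fin_orient[OF finE] by (intro Min_in) auto
  then obtain h0 where h0: "h0 \<in> orientations E ends" "OPT V E ends = entropy V (indeg_dist E h0)"
    by auto
  have inc0: "\<forall>e\<in>E. incident ends (h0 e) e" using h0 unfolding orientations_def by auto
  have "lp_value V E ends \<le> lp_obj V E ends (indeg_dist E h0)"
    using val opt in_polytope[OF mg m inc0] by auto
  also have "\<dots> \<le> OPT V E ends" using h0(2) entropy_ge[OF mg m inc0] by simp
  finally have last: "lp_value V E ends \<le> OPT V E ends" .
  show ?thesis unfolding q_def[symmetric] by (intro conjI qP opt val last)
qed

end
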